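(* (1) For every $\mathtt{dCBN}$ term $M$: $\mathcal T^n(M)=\mathcal T(M^n)$. (2) For every $\mathtt{dCBV}$ term $M$: $\mathcal T^v(M)=\mathcal T(M^v)$.
   Context: \textbf{dBang and translations.} $\mathtt{dBang}$ terms: $M ::= x\mid\lambda x.M\mid MN\mid M[N/x]\mid\ !M\mid\mathrm{der}\,M$. $\mathtt{dCBN}$/$\mathtt{dCBV}$ terms: $M::=x\mid\lambda x.M\mid MN\mid M[N/x]$; values $V::=x\mid\lambda x.M$; list contexts $L::=\square\mid L[N/x]$. $x^n=x$, $(\lambda x.M)^n=\lambda x.M^n$, $(MN)^n=M^n\,!N^n$, $(M[N/x])^n=M^n[!N^n/x]$. $x^v=!x$, $(\lambda x.M)^v=!(\lambda x.M^v)$, $(MN)^v=L\langle P\rangle N^v$ if $M^v=L\langle !P\rangle$ for a list context $L$, else $(MN)^v=\mathrm{der}(M^v)\,N^v$; $(M[N/x])^v=M^v[N^v/x]$. \textbf{Resource terms} $m,n::=x\mid\lambda x.m\mid mn\mid m[n/x]\mid\mathrm{der}\,m\mid[m_1,\dots,m_k]$ ($k\ge0$ multisets); resource list contexts $l::=\square\mid l[n/x]$. \textbf{dBang approximation:} $x\sqsubset x$; $\lambda x.m\sqsubset\lambda x.M$ if $m\sqsubset M$; $mn\sqsubset MN$ and $m[n/x]\sqsubset M[N/x]$ if $m\sqsubset M,n\sqsubset N$; $\mathrm{der}\,m\sqsubset\mathrm{der}\,M$ if $m\sqsubset M$; $[m_1,\dots,m_k]\sqsubset\ !M$ ($k\ge0$)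 if all $m_i\sqsubset M$. $\mathcal T(M)=\{m\mid m\sqsubset M\}$. \textbf{dCBN approximation} $\sqsubset_n$: $x\sqsubset_n x$; $\lambda x.m\sqsubset_n\lambda x.M$ if $m\sqsubset_n M$; $m[n_1,\dots,n_k]\sqsubset_n MN$ and $m[[n_1,\dots,n_k]/x]\sqsubset_n M[N/x]$ ($k\ge0$) if $m\sqsubset_n M$ and all $n_i\sqsubset_n N$. $\mathcal T^n(M)=\{m\mid m\sqsubset_n M\}$. \textbf{dCBV approximation} $\sqsubset_v$: $[x,\dots,x]\sqsubset_v x$ ($k\ge0$ copies); $[\lambda x.m_1,\dots,\lambda x.m_k]\sqsubset_v\lambda x.M$ ($k\ge0$) if all $m_i\sqsubset_v M$; $\mathrm{der}(m)\,n\sqsubset_v MN$ if $m\sqsubset_v M$, $n\sqsubset_v N$ and $M$ is not of the form $L\langle V\rangle$ with $V$ a value; $l\langle m\rangle n\sqsubset_v L\langle V\rangle N$ if $V$ is a value, $[m]\sqsubset_v V$, $n\sqsubset_v N$, and $l=\square[p_1/y_1]\cdots[p_j/y_j]$ with $L=\square[P_1/y_1]\cdots[P_j/y_j]$ and $p_i\sqsubset_v P_i$; $m[n/x]\sqsubset_v M[N/x]$ if $m\sqsubset_v M$, $n\sqsubset_v N$. $\mathcal T^v(M)=\{m\mid m\sqsubset_v M\}$. *)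

theory Defs
  imports Main "HOL-Library.Multiset"
begin

type_synonym var = string

datatype bterm =
    BVar var
  | BLam var bterm
  | BApp bterm bterm
  | BES bterm var bterm   (* BES M x N  =  M[N/x] *)
  | BBang bterm
  | BDer bterm

text \<open>dCBN / dCBV terms (shared syntax)\<close>
datatype lterm =
    Var var
  | Lam var lterm
  | App lterm lterm
  | ES lterm var lterm    (* ES M x N  =  M[N/x] *)

datatype rterm =
    RVar var
  | RLam var rterm
  | RApp rterm rterm
  | RES rterm var rterm   (* RES m x n = m[n/x] *)
  | RDer rterm
  | RBag "rterm multiset"

text \<open>List contexts L = box[P1/y1]...[Pj/yj], represented as [(y1,P1),...,(yj,Pj)]\<close>
definition bplug :: "(var \<times> bterm) list \<Rightarrow> bterm \<Rightarrow> bterm" where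
  "bplug L P = foldl (\<lambda>t (y, N). BES t y N) P L"

definition lplug :: "(var \<times> lterm) list \<Rightarrow> lterm \<Rightarrow> lterm" where
  "lplug L P = foldl (\<lambda>t (y, N). ES t y N) P L"

definition rplug :: "(var \<times> rterm) list \<Rightarrow> rterm \<Rightarrow> rterm" where
  "rplug l p = foldl (\<lambda>t (y, n). RES t y n) p l"

fun unbang :: "bterm \<Rightarrow> ((var \<times> bterm) list \<times> bterm) option" where
  "unbang (BBang P) = Some ([], P)"
| "unbang (BES M x N) = map_option (\<lambda>(L, P). (L @ [(x, N)], P)) (unbang M)"
| "unbang _ = None"

fun is_value :: "lterm \<Rightarrow> bool" where
  "is_value (Var x) = True"
| "is_value (Lam x M) = True"
| "is_value _ = False"

fun trn :: "lterm \<Rightarrow> bterm" where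
  "trn (Var x) = BVar x"
| "trn (Lam x M) = BLam x (trn M)"
| "trn (App M N) = BApp (trn M) (BBang (trn N))"
| "trn (ES M x N) = BES (trn M) x (BBang (trn N))"

fun trv :: "lterm \<Rightarrow> bterm" where
  "trv (Var x) = BBang (BVar x)"
| "trv (Lam x M) = BBang (BLam x (trv M))"
| "trv (App M N) = (case unbang (trv M) of
      Some (L, P) \<Rightarrow> BApp (bplug L P) (trv N)
    | None \<Rightarrow> BApp (BDer (trv M)) (trv N))"
| "trv (ES M x N) = BES (trv M) x (trv N)"

inductive approx :: "rterm \<Rightarrow> bterm \<Rightarrow> bool" where
  "approx (RVar x) (BVar x)"
| "approx m M \<Longrightarrow> approx (RLam x m) (BLam x M)"
| "approx m M \<Longrightarrow> approx n N \<Longrightarrow> approx (RApp m n) (BApp M N)"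
| "approx m M \<Longrightarrow> approx n N \<Longrightarrow> approx (RES m x n) (BES M x N)"
| "approx m M \<Longrightarrow> approx (RDer m) (BDer M)"
| "(\<forall>m\<in>#ms. approx m M) \<Longrightarrow> approx (RBag ms) (BBang M)"

definition T :: "bterm \<Rightarrow> rterm set" where
  "T M = {m. approx m M}"

inductive approx_n :: "rterm \<Rightarrow> lterm \<Rightarrow> bool" where
  "approx_n (RVar x) (Var x)"
| "approx_n m M \<Longrightarrow> approx_n (RLam x m) (Lam x M)"
| "approx_n m M \<Longrightarrow> (\<forall>n\<in>#ns. approx_n n N) \<Longrightarrow> approx_n (RApp m (RBag ns)) (App M N)"
| "approx_n m M \<Longrightarrow> (\<forall>n\<in>#ns. approx_n n N) \<Longrightarrow> approx_n (RES m x (RBag ns)) (ES M x N)"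

definition Tn :: "lterm \<Rightarrow> rterm set" where
  "Tn M = {m. approx_n m M}"

inductive approx_v :: "rterm \<Rightarrow> lterm \<Rightarrow> bool" where
  "(\<forall>m\<in>#ms. m = RVar x) \<Longrightarrow> approx_v (RBag ms) (Var x)"
| "(\<forall>m\<in>#ms. \<exists>m'. m = RLam x m' \<and> approx_v m' M) \<Longrightarrow> approx_v (RBag ms) (Lam x M)"
| "approx_v m M \<Longrightarrow> approx_v n N \<Longrightarrow> \<not> (\<exists>L V. is_value V \<and> M = lplug L V)
     \<Longrightarrow> approx_v (RApp (RDer m) n) (App M N)"
| "is_value V \<Longrightarrow> approx_v (RBag {#m#}) V \<Longrightarrow> approx_v n N
     \<Longrightarrow> length ys = length ps \<Longrightarrow> list_all2 approx_v ps Ps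
     \<Longrightarrow> approx_v (RApp (rplug (zip ys ps) m) n) (App (lplug (zip ys Ps) V) N)"
| "approx_v m M \<Longrightarrow> approx_v n N \<Longrightarrow> approx_v (RES m x n) (ES M x N)"

definition Tv :: "lterm \<Rightarrow> rterm set" where
  "Tv M = {m. approx_v m M}"

end

theory Submission
  imports Defs
begin

inductive_simps approx_BVar: "approx m (BVar x)"
inductive_simps approx_BLam: "approx m (BLam x M)"
inductive_simps approx_BApp: "approx m (BApp M N)"
inductive_simps approx_BES: "approx m (BES M x N)"
inductive_simps approx_BDer: "approx m (BDer M)"
inductive_simps approx_BBang: "approx m (BBang M)"

inductive_simps approxn_Var: "approx_n m (Var x)"
inductive_simps approxn_Lam: "approx_n m (Lam x M)"
inductive_simps approxn_App: "approx_n m (App M N)"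
inductive_simps approxn_ES: "approx_n m (ES M x N)"

lemmas approx_simps = approx_BVar approx_BLam approx_BApp approx_BES approx_BDer approx_BBang

lemma cbn: "approx_n m M \<longleftrightarrow> approx m (trn M)"
proof (induction M arbitrary: m)
  case (Var x) then show ?case by (auto simp: approx_simps approxn_Var)
next
  case (Lam x M) then show ?case by (auto simp: approx_simps approxn_Lam)
next
  case (App M N) then show ?case by (auto simp: approx_simps approxn_App)
next
  case (ES M x N) then show ?case by (auto simp: approx_simps approxn_ES)
qed

lemma lplug_snoc[simp]: "lplug (L @ [(y,P)]) V = ES (lplug L V) y P"
  by (simp add: lplug_def)
lemma bplug_snoc[simp]: "bplug (L @ [(y,P)]) V = BES (bplug L V) y P"
  by (simp add: bplug_def)
lemma rplug_snoc[simp]: "rplug (L @ [(y,P)]) V = RES (rplug L V) y P"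
  by (simp add: rplug_def)
lemma lplug_Nil[simp]: "lplug [] V = V" by (simp add: lplug_def)
lemma bplug_Nil[simp]: "bplug [] V = V" by (simp add: bplug_def)
lemma rplug_Nil[simp]: "rplug [] V = V" by (simp add: rplug_def)

lemma trv_lplug: "trv (lplug L V) = bplug (map (\<lambda>(y,Q). (y, trv Q)) L) (trv V)"
  by (induction L rule: rev_induct) auto

lemma unbang_bplug: "unbang (bplug L (BBang P)) = Some (L, P)"
  by (induction L rule: rev_induct) auto

lemma value_bang: "is_value V \<Longrightarrow> \<exists>P. trv V = BBang P"
  by (cases V) auto

lemma unbang_trv: "unbang (trv M) = Some (L', P) \<Longrightarrow> \<exists>L V. is_value V \<and> M = lplug L V"
proof (induction M arbitrary: L')
  case (Var x) then show ?case by (intro exI[of _ "[]"] exI[of _ "Var x"]) auto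
next
  case (Lam x M) then show ?case by (intro exI[of _ "[]"] exI[of _ "Lam x M"]) auto
next
  case (App M N) then show ?case by (auto split: option.splits)
next
  case (ES M x N)
  then obtain L0 where "unbang (trv M) = Some (L0, P)" by auto
  with ES.IH obtain L V where "is_value V" "M = lplug L V" by blast
  then show ?case by (intro exI[of _ "L @ [(x,N)]"] exI[of _ V]) auto
qed

lemma lplug_unique: "is_value V \<Longrightarrow> is_value V' \<Longrightarrow> lplug L V = lplug L' V' \<Longrightarrow> L = L' \<and> V = V'"
proof (induction L arbitrary: L' rule: rev_induct)
  case Nil
  then show ?case by (cases L' rule: rev_exhaust; cases V; auto)
next
  case (snoc a L)
  then show ?case by (cases L' rule: rev_exhaust; cases V'; cases a; auto)
qed

lemma approx_bplug: "approx m (bplug L P) \<longleftrightarrow>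
  (\<exists>ps p. m = rplug (zip (map fst L) ps) p \<and> list_all2 approx ps (map snd L) \<and> approx p P)"
proof (induction L arbitrary: m rule: rev_induct)
  case Nil then show ?case by auto
next
  case (snoc a L)
  obtain y Q where a: "a = (y,Q)" by (cases a)
  show ?case
  proof
    assume "approx m (bplug (L @ [a]) P)"
    then obtain m1 n where m: "m = RES m1 y n" "approx m1 (bplug L P)" "approx n Q"
      by (auto simp: a approx_simps)
    then obtain ps p where "m1 = rplug (zip (map fst L) ps) p" "list_all2 approx ps (map snd L)" "approx p P"
      using snoc by blast
    then show "\<exists>ps p. m = rplug (zip (map fst (L @ [a])) ps) p \<and> list_all2 approx ps (map snd (L @ [a])) \<and> approx p P"
      using m by (intro exI[of _ "ps @ [n]"] exI[of _ p]) (auto simp: a list_all2_lengthD list_all2_appendI)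
  next
    assume "\<exists>ps p. m = rplug (zip (map fst (L @ [a])) ps) p \<and> list_all2 approx ps (map snd (L @ [a])) \<and> approx p P"
    then obtain ps p where h: "m = rplug (zip (map fst (L @ [a])) ps) p" "list_all2 approx ps (map snd (L @ [a]))" "approx p P" by blast
    then obtain ps' n where ps: "ps = ps' @ [n]" "list_all2 approx ps' (map snd L)" "approx n Q"
      by (auto simp: a list_all2_append2 list_all2_Cons2)
    have "length ps' = length L" using ps(2) by (simp add: list_all2_lengthD)
    then have "m = RES (rplug (zip (map fst L) ps') p) y n" using h(1) ps(1) by (simp add: a)
    then show "approx m (bplug (L @ [a]) P)" using snoc[of "rplug (zip (map fst L) ps') p"] ps h(3)
      by (auto simp: a approx_simps)
  qed
qed

lemma size_lplug: "Q \<in> snd ` set L \<Longrightarrow> size Q < size (lplug L V)"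
  "size V \<le> size (lplug L V)"
  by (induction L rule: rev_induct) (auto, metis image_eqI snd_conv less_SucI trans_less_add1)


inductive_simps approxv_Var: "approx_v m (Var x)"
inductive_simps approxv_Lam: "approx_v m (Lam x M)"
inductive_simps approxv_App: "approx_v m (App M N)"
inductive_simps approxv_ES: "approx_v m (ES M x N)"

lemma la2_conv: "(\<And>Q m. Q \<in> set Qs \<Longrightarrow> approx_v m Q \<longleftrightarrow> approx m (trv Q)) \<Longrightarrow>
   list_all2 approx_v ps Qs \<longleftrightarrow> list_all2 approx ps (map trv Qs)"
  by (auto simp: list_all2_conv_all_nth)

lemma bag1: "approx (RBag {#m#}) (BBang P) \<longleftrightarrow> approx m P"
  by (auto simp: approx_simps)

lemma cbv: "approx_v m M \<longleftrightarrow> approx m (trv M)"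
proof (induction M arbitrary: m rule: measure_induct_rule[of size])
  case (less M)
  show ?case
  proof (cases M)
    case (Var x) then show ?thesis by (auto simp: approx_simps approxv_Var)
  next
    case (Lam x B)
    have "size B < size M" using Lam by simp
    then show ?thesis using Lam less.IH[of B] by (auto simp: approx_simps approxv_Lam)
  next
    case (ES B x N)
    have "size B < size M" "size N < size M" using ES by auto
    then show ?thesis using ES less.IH[of B] less.IH[of N] by (auto simp: approx_simps approxv_ES)
  next
    case (App M1 N)
    have sN: "size N < size M" "size M1 < size M" using App by auto
    show ?thesis
    proof (cases "\<exists>L V. is_value V \<and> M1 = lplug L V")
      case True
      then obtain L V where LV: "is_value V" "M1 = lplug L V" by blast
      obtain P where P: "trv V = BBang P" using value_bang[OF LV(1)] by blast
      define L' where "L' = map (\<lambda>(y,Q). (y, trv Q)) L"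
      have trvM: "trv M = BApp (bplug L' P) (trv N)"
        using App LV P by (simp add: trv_lplug unbang_bplug L'_def)
      have sV: "size V < size M" using size_lplug(2)[of V L] LV App by simp
      have sL: "\<And>Q. Q \<in> set (map snd L) \<Longrightarrow> size Q < size M" using size_lplug(1)[of _ L V] LV App by fastforce
      have fstL': "map fst L' = map fst L" by (auto simp: L'_def)
      have sndL': "map snd L' = map trv (map snd L)" by (auto simp: L'_def)
      have IHL: "\<And>ps. list_all2 approx_v ps (map snd L) \<longleftrightarrow> list_all2 approx ps (map trv (map snd L))"
        by (rule la2_conv) (use sL less.IH in blast)
      show ?thesis
      proof
        assume "approx_v m M"
        then have "approx_v m (App M1 N)" using App by simp
        then obtain V' ys ps Ps m0 n where h: "m = RApp (rplug (zip ys ps) m0) n"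
          "M1 = lplug (zip ys Ps) V'" "is_value V'" "approx_v (RBag {#m0#}) V'" "approx_v n N"
          "length ys = length ps" "list_all2 approx_v ps Ps"
          using LV by (auto simp: approxv_App)
        have u: "zip ys Ps = L" "V' = V" using lplug_unique[OF h(3) LV(1), of "zip ys Ps" L] h(2) LV(2) by auto
        have len: "length Ps = length ys" using h(6,7) by (simp add: list_all2_lengthD)
        have ys: "ys = map fst L" "Ps = map snd L" using u(1) len by (metis map_fst_zip, metis map_snd_zip)
        have "approx m0 P" using less.IH[OF sV, of "RBag {#m0#}"] h(4) u(2) P bag1 by simp
        moreover have "list_all2 approx ps (map snd L')" using IHL h(7) ys sndL' by simp
        ultimately have "approx (rplug (zip ys ps) m0) (bplug L' P)"
          apply (subst approx_bplug)
          apply (rule exI[of _ ps], rule exI[of _ m0])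
          by (simp add: ys fstL')
        then show "approx m (trv M)" using trvM h(1) less.IH[OF sN(1)] h(5)
          by (auto simp: approx_simps)
      next
        assume "approx m (trv M)"
        then obtain a n where an: "m = RApp a n" "approx a (bplug L' P)" "approx n (trv N)"
          using trvM by (auto simp: approx_simps)
        then obtain ps p where pp: "a = rplug (zip (map fst L) ps) p" "list_all2 approx ps (map trv (map snd L))" "approx p P"
          using approx_bplug[of a L' P] fstL' sndL' by auto
        have 1: "approx_v (RBag {#p#}) V" using less.IH[OF sV] P bag1 pp(3) by simp
        have 2: "approx_v n N" using less.IH[OF sN(1)] an(3) by simp
        have 3: "list_all2 approx_v ps (map snd L)" using IHL pp(2) by simp
        have len: "length (map fst L) = length ps" using 3 by (simp add: list_all2_lengthD)
        have "approx_v (RApp (rplug (zip (map fst L) ps) p) n) (App (lplug (zip (map fst L) (map snd L)) V) N)"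
          by (rule approx_v.intros(4)[OF LV(1) 1 2 len 3])
        then show "approx_v m M" using App LV an(1) pp(1) by (simp add: zip_map_fst_snd)
      qed
    next
      case False
      have "unbang (trv M1) = None" using False unbang_trv by (cases "unbang (trv M1)") fastforce+
      then have trvM: "trv M = BApp (BDer (trv M1)) (trv N)" using App by simp
      have "approx_v m M \<longleftrightarrow> (\<exists>a n. m = RApp (RDer a) n \<and> approx_v a M1 \<and> approx_v n N)"
        using App False by (auto simp: approxv_App)
      then show ?thesis using trvM less.IH[OF sN(1)] less.IH[OF sN(2)] by (auto simp: approx_simps)
    qed
  qed
qed

theorem mainTheorem9:
  shows "(\<forall>M. Tn M = T (trn M)) \<and> (\<forall>M. Tv M = T (trv M))"
  by (auto simp: Tn_def Tv_def T_def cbn cbv)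

end
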